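(* If $\Lambda$ is a Legendrian knot with $\operatorname{tb}(\Lambda)<0$, then $$m(\Lambda)\ge\left\lceil\sqrt{-\operatorname{tb}(\Lambda)-\tfrac34}+\tfrac32\right\rceil.$$
   Context: Legendrian knots are taken in the standard contact structure on $\mathbb{R}^3$ and represented by front ($xz$-) projections, which have cusps in place of vertical tangencies and in which the strand of more negative slope is the overstrand at every crossing. For an oriented front with $P$ positive crossings, $N$ negative crossings and $C$ cusps, the Thurston–Bennequin number is $\operatorname{tb}=P-N-\frac12C$, a Legendrian isotopy invariant. Legendrian mosaic tiles: a square tile whose four edge midpoints are potential connection points; the tiles are $T_0$ (empty); $T_1,\dots,T_4$ (a single arc joining midpoints of two adjacent edges, one per pair of adjacent edges); $T_5,T_6$ (a segment joining midpoints of opposite edges); $T_7,T_8$ (two disjoint arcs each joining adjacent edges, using all four midpoints); $T_{10}$ (two crossing segments joining opposite edges). A Legendrian $n$-mosaic is an $n\times n$ array of these tiles with the array rotated $45^\circ$ counterclockwise so the strands form a front diagram (after rotation $T_2$, $T_4$ contain one cusp and $T_8$ two cusps; $T_1,T_3,T_7$ contain none; in $T_{10}$ the negative-slope strand is over). It is suitably connected if connection points agree across shared edges and none lies on the outer boundary. The mosaic number $m(\Lambda)$ of a Legendrian knot $\Lambda$ is the smallest $n$ such that some suitably connected Legendrian $n$-mosaic depicts a front of a Legendrian knot Legendrian isotopic to $\Lambda$. *)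

theory Defs
  imports Complex_Main "HOL-Library.Extended_Nat"
begin

text \<open>Edges of a (non-rotated) tile: left, right, top, bottom.
  A mosaic is indexed M i j, row i counted from the top, column j from the left.\<close>
datatype edge = eL | eR | eT | eB

datatype tile = T0 | T1 | T2 | T3 | T4 | T5 | T6 | T7 | T8 | T10

text \<open>T1: left-bottom, T2: bottom-right, T3: right-top, T4: top-left (after the
  45 degree counterclockwise rotation T2 and T4 contain a cusp, T1 and T3 do not);
  T5 horizontal, T6 vertical; T7 = T1+T3; T8 = T2+T4; T10 = crossing, where the
  vertical (top-bottom) strand, which has negative slope after rotation, is over.\<close>
fun segs :: "tile \<Rightarrow> edge set set" where
  "segs T0 = {}"
| "segs T1 = {{eL, eB}}"
| "segs T2 = {{eB, eR}}"
| "segs T3 = {{eR, eT}}"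
| "segs T4 = {{eT, eL}}"
| "segs T5 = {{eL, eR}}"
| "segs T6 = {{eT, eB}}"
| "segs T7 = {{eL, eB}, {eR, eT}}"
| "segs T8 = {{eB, eR}, {eT, eL}}"
| "segs T10 = {{eL, eR}, {eT, eB}}"

definition has_conn :: "tile \<Rightarrow> edge \<Rightarrow> bool" where
  "has_conn t e \<longleftrightarrow> (\<exists>s\<in>segs t. e \<in> s)"

type_synonym mosaic = "nat \<Rightarrow> nat \<Rightarrow> tile"

definition suitably_connected :: "nat \<Rightarrow> mosaic \<Rightarrow> bool" where
  "suitably_connected n M \<longleftrightarrow>
     (\<forall>i<n. \<forall>j<n.
        (has_conn (M i j) eR \<longleftrightarrow> j + 1 < n \<and> has_conn (M i (j+1)) eL) \<and>
        (has_conn (M i j) eL \<longleftrightarrow> 0 < j \<and> has_conn (M i (j-1)) eR) \<and>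
        (has_conn (M i j) eB \<longleftrightarrow> i + 1 < n \<and> has_conn (M (i+1) j) eT) \<and>
        (has_conn (M i j) eT \<longleftrightarrow> 0 < i \<and> has_conn (M (i-1) j) eB))"

text \<open>An oriented segment (i, j, a, b): the strand in tile (i,j) entered through
  edge a and left through edge b.\<close>
type_synonym oseg = "nat \<times> nat \<times> edge \<times> edge"

definition valid_oseg :: "nat \<Rightarrow> mosaic \<Rightarrow> oseg \<Rightarrow> bool" where
  "valid_oseg n M s = (case s of (i, j, a, b) \<Rightarrow>
      i < n \<and> j < n \<and> a \<noteq> b \<and> {a, b} \<in> segs (M i j))"

definition linked :: "oseg \<Rightarrow> oseg \<Rightarrow> bool" where
  "linked s s' = (case s of (i, j, a, b) \<Rightarrow> case s' of (i', j', a', b') \<Rightarrow>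
      (case b of
         eR \<Rightarrow> i' = i \<and> j' = j + 1 \<and> a' = eL
       | eL \<Rightarrow> i' = i \<and> j' + 1 = j \<and> a' = eR
       | eB \<Rightarrow> i' = i + 1 \<and> j' = j \<and> a' = eT
       | eT \<Rightarrow> i' + 1 = i \<and> j' = j \<and> a' = eB))"

definition useg :: "oseg \<Rightarrow> nat \<times> nat \<times> edge set" where
  "useg s = (case s of (i, j, a, b) \<Rightarrow> (i, j, {a, b}))"

text \<open>A knot traversal: a single closed oriented curve passing through every strand
  segment of the mosaic exactly once (so the diagram has exactly one component).\<close>
definition knot_traversal :: "nat \<Rightarrow> mosaic \<Rightarrow> oseg list \<Rightarrow> bool" where
  "knot_traversal n M ss \<longleftrightarrow>
     ss \<noteq> [] \<and>
     (\<forall>k < length ss. valid_oseg n M (ss ! k) \<and>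
                      linked (ss ! k) (ss ! ((k + 1) mod length ss))) \<and>
     distinct (map useg ss) \<and>
     set (map useg ss) = {(i, j, s). i < n \<and> j < n \<and> s \<in> segs (M i j)}"

definition legendrian_knot_mosaic :: "nat \<Rightarrow> mosaic \<Rightarrow> bool" where
  "legendrian_knot_mosaic n M \<longleftrightarrow> suitably_connected n M \<and> (\<exists>ss. knot_traversal n M ss)"

definition num_cusps :: "nat \<Rightarrow> mosaic \<Rightarrow> nat" where
  "num_cusps n M = card {(i, j, s). i < n \<and> j < n \<and> s \<in> segs (M i j) \<and>
                                   (s = {eT, eL} \<or> s = {eB, eR})}"

text \<open>Sign of the crossing in a T10 tile (i,j) w.r.t. the orientation ss: with the
  over strand vertical and the under strand horizontal, the crossing is positive iff
  (over direction, under direction) is a positively oriented basis, i.e. iff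
  (over up and under leftward) or (over down and under rightward).\<close>
definition crossing_positive :: "oseg list \<Rightarrow> nat \<Rightarrow> nat \<Rightarrow> bool" where
  "crossing_positive ss i j \<longleftrightarrow> ((i, j, eB, eT) \<in> set ss \<longleftrightarrow> (i, j, eR, eL) \<in> set ss)"

definition num_pos :: "nat \<Rightarrow> mosaic \<Rightarrow> oseg list \<Rightarrow> nat" where
  "num_pos n M ss = card {(i, j). i < n \<and> j < n \<and> M i j = T10 \<and> crossing_positive ss i j}"

definition num_neg :: "nat \<Rightarrow> mosaic \<Rightarrow> oseg list \<Rightarrow> nat" where
  "num_neg n M ss = card {(i, j). i < n \<and> j < n \<and> M i j = T10 \<and> \<not> crossing_positive ss i j}"

definition front_tb :: "nat \<Rightarrow> mosaic \<Rightarrow> oseg list \<Rightarrow> real" where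
  "front_tb n M ss = real (num_pos n M ss) - real (num_neg n M ss) - real (num_cusps n M) / 2"

text \<open>Mosaic number, relative to the relation depicts n M L: "the n-mosaic M depicts
  a front of a Legendrian knot Legendrian isotopic to L". Infimum in enat (infinity
  if no mosaic exists).\<close>
definition mosaic_number :: "(nat \<Rightarrow> mosaic \<Rightarrow> 'k \<Rightarrow> bool) \<Rightarrow> 'k \<Rightarrow> enat" where
  "mosaic_number depicts L =
     (INF n \<in> {n. \<exists>M. legendrian_knot_mosaic n M \<and> depicts n M L}. enat n)"

end

theory Submission imports Defs begin
definition wt :: "tile \<Rightarrow> nat" where
 "wt t = 2 * of_bool (t = T10) + card {s. s \<in> segs t \<and> (s = {eT, eL} \<or> s = {eB, eR})}"
lemma wt_eq: "wt t = (case t of T2 \<Rightarrow> 1 | T4 \<Rightarrow> 1 | T8 \<Rightarrow> 2 | T10 \<Rightarrow> 2 | _ \<Rightarrow> 0)"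
proof (cases t)
  case T2
  have "{s. s \<in> segs t \<and> (s = {eT, eL} \<or> s = {eB, eR})} = {{eB,eR}}" using T2 by auto
  then show ?thesis using T2 by (simp add: wt_def)
next
  case T4
  have "{s. s \<in> segs t \<and> (s = {eT, eL} \<or> s = {eB, eR})} = {{eT,eL}}" using T4 by auto
  then show ?thesis using T4 by (simp add: wt_def)
next
  case T8
  have "{s. s \<in> segs t \<and> (s = {eT, eL} \<or> s = {eB, eR})} = {{eB,eR},{eT,eL}}" using T8 by auto
  moreover have "{eB,eR} \<noteq> {eT,eL}" by (auto simp: doubleton_eq_iff)
  ultimately show ?thesis using T8 by (simp add: wt_def)
next
  case T10
  have "{s. s \<in> segs t \<and> (s = {eT, eL} \<or> s = {eB, eR})} = {}" using T10 by (auto simp: doubleton_eq_iff)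
  then show ?thesis using T10 by (simp add: wt_def)
qed (auto simp: wt_def doubleton_eq_iff)

lemma wt_le2: "wt t \<le> 2" by (cases t) (simp_all add: wt_eq)
lemma wt_T: "\<not> has_conn t eT \<Longrightarrow> wt t = of_bool (t = T2)"
  by (cases t) (auto simp: wt_eq has_conn_def)
lemma wt_B: "\<not> has_conn t eB \<Longrightarrow> wt t = of_bool (t = T4)"
  by (cases t) (auto simp: wt_eq has_conn_def)
lemma wt_L: "\<not> has_conn t eL \<Longrightarrow> wt t = of_bool (t = T2)"
  by (cases t) (auto simp: wt_eq has_conn_def)
lemma wt_R: "\<not> has_conn t eR \<Longrightarrow> wt t = of_bool (t = T4)"
  by (cases t) (auto simp: wt_eq has_conn_def)
lemma T2_conn: "has_conn T2 eR" "has_conn T2 eB" "\<not> has_conn T2 eL" "\<not> has_conn T2 eT"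
  by (auto simp: has_conn_def)
lemma T4_conn: "\<not> has_conn T4 eR" "\<not> has_conn T4 eB" "has_conn T4 eL" "has_conn T4 eT"
  by (auto simp: has_conn_def)

lemma K: assumes "\<And>j. j < k \<Longrightarrow> \<not> (p j \<and> p (Suc j))"
  shows "2 * (\<Sum>j<Suc k. of_bool (p j) :: nat) \<le> k + of_bool (p 0) + of_bool (p k)"
  using assms
proof (induction k)
  case 0 then show ?case by simp
next
  case (Suc k)
  have "2 * (\<Sum>j<Suc k. of_bool (p j) :: nat) \<le> k + of_bool (p 0) + of_bool (p k)"
    using Suc by auto
  moreover have "\<not> (p k \<and> p (Suc k))" using Suc.prems by auto
  ultimately show ?case by (cases "p k"; cases "p (Suc k)") auto
qed

lemma split3: "(\<Sum>i<Suc (Suc m). f i) = f 0 + (\<Sum>i<m. f (Suc i)) + (f (Suc m) :: nat)"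
proof -
  have "(\<Sum>i<Suc (Suc m). f i) = (\<Sum>i<Suc m. f i) + f (Suc m)" by simp
  also have "(\<Sum>i<Suc m. f i) = f 0 + (\<Sum>i<m. f (Suc i))" by (rule sum.lessThan_Suc_shift)
  finally show ?thesis .
qed

lemma grid_bound:
  assumes sc: "suitably_connected (Suc (Suc m)) M"
  shows "2 * (\<Sum>i<Suc (Suc m). \<Sum>j<Suc (Suc m). wt (M i j)) \<le> 4*m^2 + 4*m + 4"
proof -
  define n where "n = Suc (Suc m)"
  have scn: "suitably_connected n M" using sc n_def by simp
  have cR: "has_conn (M i j) eR \<longleftrightarrow> j + 1 < n \<and> has_conn (M i (j+1)) eL" if "i<n" "j<n" for i j
    using scn that unfolding suitably_connected_def by blast
  have cL: "has_conn (M i j) eL \<longleftrightarrow> 0 < j \<and> has_conn (M i (j-1)) eR" if "i<n" "j<n" for i j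
    using scn that unfolding suitably_connected_def by blast
  have cB: "has_conn (M i j) eB \<longleftrightarrow> i + 1 < n \<and> has_conn (M (i+1) j) eT" if "i<n" "j<n" for i j
    using scn that unfolding suitably_connected_def by blast
  have cT: "has_conn (M i j) eT \<longleftrightarrow> 0 < i \<and> has_conn (M (i-1) j) eB" if "i<n" "j<n" for i j
    using scn that unfolding suitably_connected_def by blast
  define t where "t j = (M 0 j = T2)" for j
  define b where "b j = (M (Suc m) j = T4)" for j
  define l where "l i = (M i 0 = T2)" for i
  define r where "r i = (M i (Suc m) = T4)" for i
  have wt0: "wt (M 0 j) = of_bool (t j)" if "j < n" for j
    using cT[of 0 j] that n_def by (simp add: wt_T t_def)
  have wtS: "wt (M (Suc m) j) = of_bool (b j)" if "j < n" for j
    using cB[of "Suc m" j] that n_def by (simp add: wt_B b_def)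
  have wtl: "wt (M i 0) = of_bool (l i)" if "i < n" for i
    using cL[of i 0] that n_def by (simp add: wt_L l_def)
  have wtr: "wt (M i (Suc m)) = of_bool (r i)" if "i < n" for i
    using cR[of i "Suc m"] that n_def by (simp add: wt_R r_def)
  have tK: "2 * (\<Sum>j<Suc (Suc m). of_bool (t j) :: nat) \<le> Suc m + of_bool (t 0) + of_bool (t (Suc m))"
  proof (rule K)
    fix j assume j: "j < Suc m"
    show "\<not> (t j \<and> t (Suc j))"
      using cR[of 0 j] j n_def T2_conn by (auto simp: t_def)
  qed
  have tl: "\<not> t (Suc m)" using cR[of 0 "Suc m"] n_def T2_conn by (auto simp: t_def)
  have bK: "2 * (\<Sum>j<Suc (Suc m). of_bool (b j) :: nat) \<le> Suc m + of_bool (b 0) + of_bool (b (Suc m))"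
  proof (rule K)
    fix j assume j: "j < Suc m"
    show "\<not> (b j \<and> b (Suc j))"
      using cL[of "Suc m" "Suc j"] j n_def T4_conn by (auto simp: b_def)
  qed
  have b0: "\<not> b 0" using cL[of "Suc m" 0] n_def T4_conn by (auto simp: b_def)
  have lK: "2 * (\<Sum>j<Suc (Suc m). of_bool (l j) :: nat) \<le> Suc m + of_bool (l 0) + of_bool (l (Suc m))"
  proof (rule K)
    fix j assume j: "j < Suc m"
    show "\<not> (l j \<and> l (Suc j))"
      using cB[of j 0] j n_def T2_conn by (auto simp: l_def)
  qed
  have ll: "\<not> l (Suc m)" using cB[of "Suc m" 0] n_def T2_conn by (auto simp: l_def)
  have rK: "2 * (\<Sum>j<Suc (Suc m). of_bool (r j) :: nat) \<le> Suc m + of_bool (r 0) + of_bool (r (Suc m))"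
  proof (rule K)
    fix j assume j: "j < Suc m"
    show "\<not> (r j \<and> r (Suc j))"
      using cT[of "Suc j" "Suc m"] j n_def T4_conn by (auto simp: r_def)
  qed
  have r0: "\<not> r 0" using cT[of 0 "Suc m"] n_def T4_conn by (auto simp: r_def)
  have tl0: "t 0 = l 0" by (simp add: t_def l_def)
  have br: "b (Suc m) = r (Suc m)" by (simp add: b_def r_def)
  define Row where "Row i = (\<Sum>j<Suc (Suc m). wt (M i j))" for i
  have row0: "Row 0 = (\<Sum>j<Suc (Suc m). of_bool (t j))"
    unfolding Row_def by (rule sum.cong) (auto simp: wt0 n_def)
  have rowS: "Row (Suc m) = (\<Sum>j<Suc (Suc m). of_bool (b j))"
    unfolding Row_def by (rule sum.cong) (auto simp: wtS n_def)
  have rowmid: "Row (Suc i) \<le> of_bool (l (Suc i)) + 2*m + of_bool (r (Suc i))" if "i < m" for i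
  proof -
    have "Row (Suc i) = wt (M (Suc i) 0) + (\<Sum>j<m. wt (M (Suc i) (Suc j))) + wt (M (Suc i) (Suc m))"
      unfolding Row_def by (rule split3)
    also have "(\<Sum>j<m. wt (M (Suc i) (Suc j))) \<le> (\<Sum>j<m. 2)"
      by (rule sum_mono) (rule wt_le2)
    finally show ?thesis using wtl[of "Suc i"] wtr[of "Suc i"] that n_def by simp
  qed
  have tot: "(\<Sum>i<Suc (Suc m). Row i) = Row 0 + (\<Sum>i<m. Row (Suc i)) + Row (Suc m)"
    by (rule split3)
  have mid: "(\<Sum>i<m. Row (Suc i)) \<le> (\<Sum>i<m. of_bool (l (Suc i)) + 2*m + of_bool (r (Suc i)))"
    by (rule sum_mono) (rule rowmid, simp)
  have mid2: "(\<Sum>i<m. of_bool (l (Suc i)) + 2*m + of_bool (r (Suc i)) :: nat)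
     = (\<Sum>i<m. of_bool (l (Suc i))) + 2*m*m + (\<Sum>i<m. of_bool (r (Suc i)))"
    by (simp add: sum.distrib)
  have Ls: "(\<Sum>i<Suc (Suc m). of_bool (l i) :: nat) = of_bool (l 0) + (\<Sum>i<m. of_bool (l (Suc i))) + of_bool (l (Suc m))"
    by (rule split3)
  have Rs: "(\<Sum>i<Suc (Suc m). of_bool (r i) :: nat) = of_bool (r 0) + (\<Sum>i<m. of_bool (r (Suc i))) + of_bool (r (Suc m))"
    by (rule split3)
  have "(\<Sum>i<Suc (Suc m). \<Sum>j<Suc (Suc m). wt (M i j)) = (\<Sum>i<Suc (Suc m). Row i)"
    by (simp add: Row_def)
  moreover have "m*m = m^2" by (simp add: power2_eq_square)
  ultimately show ?thesis
    using tot mid mid2 Ls Rs tK bK lK rK tl b0 ll r0 tl0 br row0 rowS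
    by (cases "l 0"; cases "r (Suc m)") auto
qed


lemma finite_segs: "finite (segs t)" by (cases t) auto

lemma n_ge2:
  assumes "legendrian_knot_mosaic n M" "knot_traversal n M ss"
  shows "\<exists>m. n = Suc (Suc m)"
proof -
  have sc: "suitably_connected n M" using assms(1) by (simp add: legendrian_knot_mosaic_def)
  have ne: "ss \<noteq> []" and v: "valid_oseg n M (ss ! 0)"
    using assms(2) unfolding knot_traversal_def by auto
  obtain i j a b where e: "ss ! 0 = (i, j, a, b)" by (cases "ss ! 0") auto
  have ij: "i < n" "j < n" and ab: "{a, b} \<in> segs (M i j)" using v e by (auto simp: valid_oseg_def)
  have hc: "has_conn (M i j) a" using ab by (auto simp: has_conn_def)
  show ?thesis
  proof (cases n)
    case 0 then show ?thesis using ij by simp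
  next
    case (Suc k)
    show ?thesis
    proof (cases k)
      case 0
      with Suc ij have "i = 0" "j = 0" "n = 1" by auto
      with hc sc show ?thesis unfolding suitably_connected_def
        by (cases a) (auto)
    next
      case (Suc m) then show ?thesis using \<open>n = Suc k\<close> by blast
    qed
  qed
qed

lemma front_bound:
  assumes sc: "suitably_connected (Suc (Suc m)) M"
  shows "- front_tb (Suc (Suc m)) M ss \<le> real (m^2 + m + 1)"
proof -
  define n where "n = Suc (Suc m)"
  have Cs: "{(i, j, s). i < n \<and> j < n \<and> s \<in> segs (M i j) \<and> (s = {eT, eL} \<or> s = {eB, eR})}
     = (SIGMA i:{..<n}. SIGMA j:{..<n}. {s. s \<in> segs (M i j) \<and> (s = {eT, eL} \<or> s = {eB, eR})})"
    by auto
  have fin: "finite {s. s \<in> segs t \<and> (s = {eT, eL} \<or> s = {eB, eR})}" for t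
    by (rule finite_subset[OF _ finite_segs[of t]]) auto
  have C: "num_cusps n M = (\<Sum>i<n. \<Sum>j<n. card {s. s \<in> segs (M i j) \<and> (s = {eT, eL} \<or> s = {eB, eR})})"
    unfolding num_cusps_def Cs
    by (simp add: card_SigmaI fin finite_SigmaI)
  have Ns: "{(i, j). i < n \<and> j < n \<and> M i j = T10} = (SIGMA i:{..<n}. {..<n} \<inter> {j. M i j = T10})"
    by auto
  have Nle: "num_neg n M ss \<le> card {(i, j). i < n \<and> j < n \<and> M i j = T10}"
    unfolding num_neg_def by (rule card_mono) (auto simp: Ns)
  have X: "card {(i, j). i < n \<and> j < n \<and> M i j = T10} = (\<Sum>i<n. \<Sum>j<n. of_bool (M i j = T10))"
    unfolding Ns by (simp add: card_SigmaI)
  have W: "(\<Sum>i<n. \<Sum>j<n. wt (M i j)) = 2 * (\<Sum>i<n. \<Sum>j<n. of_bool (M i j = T10)) + num_cusps n M"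
    unfolding C wt_def by (simp add: sum.distrib sum_distrib_left mult.commute)
  have G: "2 * (\<Sum>i<n. \<Sum>j<n. wt (M i j)) \<le> 4*m^2 + 4*m + 4"
    using grid_bound[OF sc] n_def by simp
  have "2 * num_neg n M ss + num_cusps n M \<le> 2*m^2 + 2*m + 2"
    using G W X Nle by linarith
  then have "real (2 * num_neg n M ss + num_cusps n M) \<le> real (2*m^2 + 2*m + 2)"
    by (rule of_nat_mono)
  then show ?thesis unfolding front_tb_def n_def[symmetric] by simp
qed

theorem theorem2p4:
  fixes depicts :: "nat \<Rightarrow> mosaic \<Rightarrow> 'k \<Rightarrow> bool"
    and tb :: "'k \<Rightarrow> int"
    and \<Lambda> :: 'k
  assumes tb_front: "\<And>n M ss. legendrian_knot_mosaic n M \<Longrightarrow> knot_traversal n M ss \<Longrightarrow>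
                        depicts n M \<Lambda> \<Longrightarrow> real_of_int (tb \<Lambda>) = front_tb n M ss"
    and tb_neg: "tb \<Lambda> < 0"
  shows "enat (nat \<lceil>sqrt (- real_of_int (tb \<Lambda>) - 3/4) + 3/2\<rceil>) \<le> mosaic_number depicts \<Lambda>"
  unfolding mosaic_number_def le_INF_iff
proof (intro ballI)
  fix n assume "n \<in> {n. \<exists>M. legendrian_knot_mosaic n M \<and> depicts n M \<Lambda>}"
  then obtain M where lk: "legendrian_knot_mosaic n M" and dp: "depicts n M \<Lambda>" by auto
  obtain ss where kt: "knot_traversal n M ss" using lk by (auto simp: legendrian_knot_mosaic_def)
  obtain m where nm: "n = Suc (Suc m)" using n_ge2[OF lk kt] by blast
  have sc: "suitably_connected (Suc (Suc m)) M" using lk nm by (simp add: legendrian_knot_mosaic_def)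
  have tbe: "real_of_int (tb \<Lambda>) = front_tb n M ss" using tb_front[OF lk kt dp] .
  have b: "- real_of_int (tb \<Lambda>) \<le> real m ^ 2 + real m + 1"
    using front_bound[OF sc, of ss] tbe nm by simp
  have "- real_of_int (tb \<Lambda>) - 3/4 \<le> (real m + 1/2)^2"
    using b by (simp add: power2_eq_square algebra_simps)
  then have "sqrt (- real_of_int (tb \<Lambda>) - 3/4) \<le> sqrt ((real m + 1/2)^2)"
    by (rule real_sqrt_le_mono)
  also have "\<dots> = real m + 1/2" by simp
  finally have "sqrt (- real_of_int (tb \<Lambda>) - 3/4) + 3/2 \<le> of_int (int n)" using nm by simp
  then have "\<lceil>sqrt (- real_of_int (tb \<Lambda>) - 3/4) + 3/2\<rceil> \<le> int n" by (simp add: ceiling_le_iff)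
  then have "nat \<lceil>sqrt (- real_of_int (tb \<Lambda>) - 3/4) + 3/2\<rceil> \<le> n" by (metis nat_le_iff)
  then show "enat (nat \<lceil>sqrt (- real_of_int (tb \<Lambda>) - 3/4) + 3/2\<rceil>) \<le> enat n" by (simp only: enat_ord_simps)
qed

end
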